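(* Let $$A = \begin{pmatrix} a_1 & b_1\\ c_1 & d_1\end{pmatrix},\qquad B = \begin{pmatrix} a_2 & b_2\\ c_2 & d_2\end{pmatrix}$$ be elements of $\mathrm{SL}_2(\mathbb{N}_0)$. Then $(A,B)$ is a left-right pair if and only if $a_1 d_2 \le b_2 c_1$ or $a_2 d_1 \le c_2 b_1$.
   Context: $\mathbb{N}_0=\{0,1,2,\dots\}$ and $\mathrm{SL}_2(\mathbb{N}_0)$ is the set of $2\times 2$ matrices $\begin{pmatrix} a & b\\ c & d\end{pmatrix}$ with $a,b,c,d\in\mathbb{N}_0$ and $ad-bc=1$. Such a matrix $T$ acts on the Riemann sphere $\overline{\mathbb{C}}=\mathbb{C}\cup\{\infty\}$ by the Möbius transformation $T(z)=\frac{az+b}{cz+d}$. Let $\mathcal{D}_0=\{x+iy : x>0,\ y>0\}$ (the open first quadrant). A pair $(L,R)$ of elements of $\mathrm{SL}_2(\mathbb{N}_0)$ is called a left-right pair if $L(\mathcal{D}_0)\cap R(\mathcal{D}_0)=\emptyset$. *)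

theory Defs
  imports Complex_Main
begin

text \<open>A 2x2 matrix (a b; c d) with entries in N0 is represented as the tuple (a, b, c, d).\<close>
type_synonym mat2 = "nat \<times> nat \<times> nat \<times> nat"

definition SL2N0 :: "mat2 set" where
  "SL2N0 = {(a, b, c, d). int a * int d - int b * int c = 1}"

text \<open>Moebius action on the complex numbers (points of the sphere other than infinity
  suffice, since the domain below is the open first quadrant).\<close>
definition moebius :: "mat2 \<Rightarrow> complex \<Rightarrow> complex" where
  "moebius T z = (case T of (a, b, c, d) \<Rightarrow>
     (of_nat a * z + of_nat b) / (of_nat c * z + of_nat d))"

definition D0 :: "complex set" where
  "D0 = {z. Re z > 0 \<and> Im z > 0}"

definition left_right_pair :: "mat2 \<Rightarrow> mat2 \<Rightarrow> bool" where
  "left_right_pair L R \<longleftrightarrow> moebius L ` D0 \<inter> moebius R ` D0 = {}"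

end

theory Submission imports Defs begin

lemma detC: assumes "int a * int d - int b * int c = 1"
  shows "(of_nat a * of_nat d - of_nat b * of_nat c :: complex) = 1"
proof -
  have "(of_int (int a * int d - int b * int c) :: complex) = 1" using assms by simp
  thus ?thesis by simp
qed

lemma fwd:
  assumes det: "int a * int d - int b * int c = 1" and z: "z \<in> D0"
  shows "real c * Re (moebius (a,b,c,d) z) < real a \<and> real b < real d * Re (moebius (a,b,c,d) z)"
proof -
  define q where "q = of_nat c * z + of_nat d"
  have dpos: "d > 0"
  proof (rule ccontr)
    assume "\<not> d > 0"
    hence "d = 0" by simp
    with det have "- (int b * int c) = 1" by simp
    moreover have "int b * int c \<ge> 0" by simp
    ultimately show False by linarith
  qed
  have zre: "Re z > 0" "Im z > 0" using z by (auto simp: D0_def)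
  have qre: "Re q > 0" unfolding q_def using zre dpos by (simp add: add_nonneg_pos)
  hence qnz: "q \<noteq> 0" by auto
  have w: "moebius (a,b,c,d) z = (of_nat a * z + of_nat b) / q" by (simp add: moebius_def q_def)
  have e1: "of_nat a - of_nat c * moebius (a,b,c,d) z = 1 / q"
    using qnz detC[OF det] unfolding w by (simp add: field_simps q_def)
  have e2: "of_nat d * moebius (a,b,c,d) z - of_nat b = z / q"
    using qnz detC[OF det] unfolding w by (simp add: field_simps q_def)
  have "Re (1/q) > 0" using qre by (simp add: Re_divide cmod_power2 add_pos_nonneg)
  moreover have "Re (z/q) > 0"
  proof -
    have "Re z * Re q + Im z * Im q = real c * (Re z ^2 + Im z ^2) + real d * Re z"
      by (simp add: q_def power2_eq_square algebra_simps)
    hence "Re z * Re q + Im z * Im q > 0" using zre dpos by (simp add: add_nonneg_pos)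
    moreover have "(cmod q)^2 > 0" using qnz by simp
    ultimately show ?thesis unfolding Re_divide' by (rule divide_pos_pos)
  qed
  ultimately show ?thesis using arg_cong[OF e1, of Re] arg_cong[OF e2, of Re] by simp
qed

lemma bwd:
  assumes det: "int a * int d - int b * int c = 1" and y: "y > 0"
    and h1: "real c * x < real a" and h2: "real b < real d * x"
    and h3: "real c * real d * y^2 < (real a - real c * x) * (real d * x - real b)"
  shows "Complex x y \<in> moebius (a,b,c,d) ` D0"
proof -
  define w where "w = Complex x y"
  define p where "p = of_nat a - of_nat c * w"
  have pre: "Re p > 0" using h1 by (simp add: p_def w_def)
  hence pnz: "p \<noteq> 0" by auto
  define z where "z = (of_nat d * w - of_nat b) / p"
  have e1: "of_nat c * z + of_nat d = 1 / p"
    using pnz detC[OF det] by (simp add: z_def field_simps p_def)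
  have e2: "of_nat a * z + of_nat b = w / p"
    using pnz detC[OF det] by (simp add: z_def field_simps p_def)
  have mz: "moebius (a,b,c,d) z = w"
    using e1 e2 pnz by (simp add: moebius_def)
  define N where "N = of_nat d * w - (of_nat b :: complex)"
  have npos: "(cmod p)^2 > 0" using pnz by simp
  have "Re N * Re p + Im N * Im p = (real a - real c * x) * (real d * x - real b) - real c * real d * y^2"
    by (simp add: N_def w_def p_def power2_eq_square algebra_simps)
  hence r: "Re N * Re p + Im N * Im p > 0" using h3 by simp
  have "Im N * Re p - Re N * Im p = (real a * real d - real b * real c) * y"
    by (simp add: N_def w_def p_def power2_eq_square algebra_simps)
  also have "real a * real d - real b * real c = 1"
  proof -
    have "real_of_int (int a * int d - int b * int c) = 1" using det by simp
    thus ?thesis by simp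
  qed
  finally have i: "Im N * Re p - Re N * Im p > 0" using y by simp
  have zN: "z = N / p" by (simp add: z_def N_def)
  have "Re z > 0" unfolding zN Re_divide' using r npos by (rule divide_pos_pos)
  moreover have "Im z > 0" unfolding zN Im_divide' using i npos by (rule divide_pos_pos)
  ultimately have "z \<in> D0" by (simp add: D0_def)
  thus ?thesis using mz w_def by (metis image_eqI)
qed

lemma dpos: assumes det: "int a * int d - int b * int c = 1" shows "d > 0"
proof (rule ccontr)
  assume "\<not> d > 0"
  hence "d = 0" by simp
  with det have "- (int b * int c) = 1" by simp
  moreover have "int b * int c \<ge> 0" by simp
  ultimately show False by linarith
qed

lemma detR: assumes det: "int a * int d - int b * int c = 1"
  shows "real a * real d = real b * real c + 1"
proof -
  have "real_of_int (int a * int d - int b * int c) = 1" using det by simp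
  thus ?thesis by simp
qed

lemma disj_half:
  assumes d1: "int a1 * int d1 - int b1 * int c1 = 1" and d2: "int a2 * int d2 - int b2 * int c2 = 1"
    and h: "a1 * d2 \<le> b2 * c1"
  shows "moebius (a1,b1,c1,d1) ` D0 \<inter> moebius (a2,b2,c2,d2) ` D0 = {}"
proof (rule ccontr)
  assume "\<not> ?thesis"
  then obtain z1 z2 where z: "z1 \<in> D0" "z2 \<in> D0" and eq: "moebius (a1,b1,c1,d1) z1 = moebius (a2,b2,c2,d2) z2"
    by blast
  define X where "X = Re (moebius (a2,b2,c2,d2) z2)"
  have A: "real c1 * X < real a1" using fwd[OF d1 z(1)] eq X_def by simp
  have B: "real b2 < real d2 * X" using fwd[OF d2 z(2)] X_def by simp
  have dp: "real d2 > 0" using dpos[OF d2] by simp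
  have "real d2 * (real c1 * X) < real d2 * real a1" using A dp by simp
  moreover have "real c1 * real b2 \<le> real c1 * (real d2 * X)" using B by (simp add: mult_left_mono)
  moreover have "real a1 * real d2 \<le> real b2 * real c1" using h by (metis of_nat_le_iff of_nat_mult)
  ultimately show False by (simp add: algebra_simps)
qed

lemma overlap:
  assumes d1: "int a1 * int d1 - int b1 * int c1 = 1" and d2: "int a2 * int d2 - int b2 * int c2 = 1"
    and h1: "b2 * c1 < a1 * d2" and h2: "c2 * b1 < a2 * d1"
  shows "moebius (a1,b1,c1,d1) ` D0 \<inter> moebius (a2,b2,c2,d2) ` D0 \<noteq> {}"
proof -
  have p1: "real d1 > 0" using dpos[OF d1] by simp
  have p2: "real d2 > 0" using dpos[OF d2] by simp
  have R1: "real a1 * real d1 = real b1 * real c1 + 1" using detR[OF d1] .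
  have R2: "real a2 * real d2 = real b2 * real c2 + 1" using detR[OF d2] .
  have H1: "real b2 * real c1 < real a1 * real d2" using h1 by (metis of_nat_less_iff of_nat_mult)
  have H2: "real c2 * real b1 < real a2 * real d1" using h2 by (metis of_nat_less_iff of_nat_mult)
  define L where "L = max (real b1 / real d1) (real b2 / real d2)"
  have c11: "real c1 * (real b1 / real d1) < real a1" using p1 R1 by (simp add: field_simps)
  have c12: "real c1 * (real b2 / real d2) < real a1" using p2 H1 by (simp add: field_simps)
  have c21: "real c2 * (real b1 / real d1) < real a2" using p1 H2 by (simp add: field_simps)
  have c22: "real c2 * (real b2 / real d2) < real a2" using p2 R2 by (simp add: field_simps)
  have L1: "real c1 * L < real a1" using c11 c12 unfolding L_def by (simp add: max_def)
  have L2: "real c2 * L < real a2" using c21 c22 unfolding L_def by (simp add: max_def)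
  define m where "m = min (real a1 - real c1 * L) (real a2 - real c2 * L)"
  have mpos: "m > 0" using L1 L2 by (simp add: m_def)
  define C where "C = real c1 + real c2 + 1"
  have Cpos: "C > 0" by (simp add: C_def add_nonneg_pos)
  define t where "t = m / C"
  have tpos: "t > 0" using mpos Cpos by (simp add: t_def)
  have ct1: "real c1 * t < m"
  proof -
    have "real c1 * t \<le> C * t - t" using tpos by (simp add: C_def algebra_simps)
    also have "\<dots> < m" using tpos Cpos by (simp add: t_def)
    finally show ?thesis .
  qed
  have ct2: "real c2 * t < m"
  proof -
    have "real c2 * t \<le> C * t - t" using tpos by (simp add: C_def algebra_simps)
    also have "\<dots> < m" using tpos Cpos by (simp add: t_def)
    finally show ?thesis .
  qed
  define x where "x = L + t"
  have X1: "real c1 * x < real a1" using ct1 unfolding x_def m_def by (simp add: algebra_simps)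
  have X2: "real c2 * x < real a2" using ct2 unfolding x_def m_def by (simp add: algebra_simps)
  have Y1: "real b1 < real d1 * x"
  proof -
    have "real b1 / real d1 < x" using tpos unfolding x_def L_def by simp
    thus ?thesis using p1 by (simp add: field_simps)
  qed
  have Y2: "real b2 < real d2 * x"
  proof -
    have "real b2 / real d2 < x" using tpos unfolding x_def L_def by simp
    thus ?thesis using p2 by (simp add: field_simps)
  qed
  define e1 where "e1 = (real a1 - real c1 * x) * (real d1 * x - real b1)"
  define e2 where "e2 = (real a2 - real c2 * x) * (real d2 * x - real b2)"
  have e1p: "e1 > 0" using X1 Y1 by (simp add: e1_def)
  have e2p: "e2 > 0" using X2 Y2 by (simp add: e2_def)
  define me where "me = min e1 e2"
  have mep: "me > 0" using e1p e2p by (simp add: me_def)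
  define K where "K = real c1 * real d1 + real c2 * real d2"
  have K0: "K \<ge> 0" by (simp add: K_def)
  define y where "y = min 1 (me / (K + 1))"
  have ypos: "y > 0" using mep K0 by (simp add: y_def)
  have y1: "y \<le> 1" by (simp add: y_def)
  have yK: "K * y < me"
  proof -
    have "y \<le> me / (K+1)" by (simp add: y_def)
    hence "(K+1) * y \<le> me" using K0 by (simp add: field_simps)
    thus ?thesis using ypos by (simp add: algebra_simps)
  qed
  have y2: "y^2 \<le> y" using ypos y1 by (simp add: power2_eq_square mult_left_le)
  have Ky: "K * y^2 < me"
  proof -
    have "K * y^2 \<le> K * y" using y2 K0 by (simp add: mult_left_mono)
    thus ?thesis using yK by simp
  qed
  have q1: "real c1 * real d1 * y^2 \<le> K * y^2" by (simp add: K_def algebra_simps)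
  have q2: "real c2 * real d2 * y^2 \<le> K * y^2" by (simp add: K_def algebra_simps)
  have G1: "real c1 * real d1 * y^2 < e1" using q1 Ky by (simp add: me_def)
  have G2: "real c2 * real d2 * y^2 < e2" using q2 Ky by (simp add: me_def)
  have "Complex x y \<in> moebius (a1,b1,c1,d1) ` D0"
    using bwd[OF d1 ypos X1 Y1] G1 by (simp add: e1_def)
  moreover have "Complex x y \<in> moebius (a2,b2,c2,d2) ` D0"
    using bwd[OF d2 ypos X2 Y2] G2 by (simp add: e2_def)
  ultimately show ?thesis by blast
qed

theorem theorem1p1:
  fixes a1 b1 c1 d1 a2 b2 c2 d2 :: nat
  assumes "(a1, b1, c1, d1) \<in> SL2N0" and "(a2, b2, c2, d2) \<in> SL2N0"
  shows "left_right_pair (a1, b1, c1, d1) (a2, b2, c2, d2) \<longleftrightarrow>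
         (a1 * d2 \<le> b2 * c1 \<or> a2 * d1 \<le> c2 * b1)"
proof -
  have d1: "int a1 * int d1 - int b1 * int c1 = 1" using assms(1) by (simp add: SL2N0_def)
  have d2: "int a2 * int d2 - int b2 * int c2 = 1" using assms(2) by (simp add: SL2N0_def)
  show ?thesis
  proof
    assume L: "left_right_pair (a1, b1, c1, d1) (a2, b2, c2, d2)"
    show "a1 * d2 \<le> b2 * c1 \<or> a2 * d1 \<le> c2 * b1"
    proof (rule ccontr)
      assume "\<not> ?thesis"
      hence "b2 * c1 < a1 * d2" "c2 * b1 < a2 * d1" by auto
      from overlap[OF d1 d2 this] L show False by (simp add: left_right_pair_def)
    qed
  next
    assume "a1 * d2 \<le> b2 * c1 \<or> a2 * d1 \<le> c2 * b1"
    thus "left_right_pair (a1, b1, c1, d1) (a2, b2, c2, d2)"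
    proof
      assume "a1 * d2 \<le> b2 * c1"
      thus ?thesis using disj_half[OF d1 d2] by (simp add: left_right_pair_def)
    next
      assume "a2 * d1 \<le> c2 * b1"
      hence "a2 * d1 \<le> b1 * c2" by (simp add: mult.commute)
      thus ?thesis using disj_half[OF d2 d1] by (auto simp add: left_right_pair_def)
    qed
  qed
qed

end
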